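(* For the modular data of the quantum double of $S_3$, each of the trace one modular invariants $Z_{25},Z_{52},Z_{34},Z_{43}$ has, up to equivalence, exactly one matching nimrep.
   Context: Primaries $0,\dots,7$, all self-conjugate, with $S=\frac16\begin{pmatrix}1&1&2&2&2&2&3&3\\1&1&2&2&2&2&-3&-3\\2&2&4&-2&-2&-2&0&0\\2&2&-2&4&-2&-2&0&0\\2&2&-2&-2&-2&4&0&0\\2&2&-2&-2&4&-2&0&0\\3&-3&0&0&0&0&3&-3\\3&-3&0&0&0&0&-3&3\end{pmatrix}$, fusion coefficients $N_{\lambda\mu}^\nu=\sum_\rho S_{\lambda\rho}S_{\mu\rho}\overline{S_{\nu\rho}}/S_{0\rho}$. With linear forms $s_2=\chi_0+\chi_1+2\chi_2$, $s_3=\chi_0+\chi_1+2\chi_3$, $s_4=\chi_0+\chi_2+\chi_6$, $s_5=\chi_0+\chi_3+\chi_6$ (identified with their coefficient vectors $(a_\lambda)_{\lambda=0}^7$), $Z_{ij}=s_is_j^*$ is the matrix $(a^{(i)}_\lambda a^{(j)}_\mu)_{\lambda,\mu}$. A nimrep of dimension $n$: non-negative integer $n\times n$ matrices $G_\lambda$ with $G_0=I$, $G_{\bar\lambda}=G_\lambda^t$, $G_\lambda G_\mu=\sum_\nu N_{\lambda\mu}^\nu G_\nu$; two nimreps $G',G''$ are equivalent if $PG'_\lambda P^{-1}=G''_\lambda$ for all $\lambda$ for some permutation matrix $P$. $\mathrm{Exp}(Z)$ is the multiset with $Z_{\mu\mu}$ copies of $\mu$. A nimrep matches $Z$ if $n=\mathrm{Tr}\,Z$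 and the $G_\lambda$ are simultaneously unitarily diagonalisable with joint eigenvalues $(S_{\lambda\mu}/S_{0\mu})_\lambda$, $\mu$ running through $\mathrm{Exp}(Z)$ with multiplicity. *)

theory Defs
  imports Complex_Main "HOL-Combinatorics.Permutations"
begin

text \<open>Modular data of the quantum double of S3. Primaries are 0..7 (as naturals < 8).\<close>

definition Smat_int :: "int list list" where
  "Smat_int =
    [[1,1,2,2,2,2,3,3],
     [1,1,2,2,2,2,-3,-3],
     [2,2,4,-2,-2,-2,0,0],
     [2,2,-2,4,-2,-2,0,0],
     [2,2,-2,-2,-2,4,0,0],
     [2,2,-2,-2,4,-2,0,0],
     [3,-3,0,0,0,0,3,-3],
     [3,-3,0,0,0,0,-3,3]]"

definition S :: "nat \<Rightarrow> nat \<Rightarrow> complex" where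
  "S l m = of_int (Smat_int ! l ! m) / 6"

definition dual :: "nat \<Rightarrow> nat" where
  "dual l = l"

definition Nfus :: "nat \<Rightarrow> nat \<Rightarrow> nat \<Rightarrow> complex" where
  "Nfus l m n = (\<Sum>r<8. S l r * S m r * cnj (S n r) / S 0 r)"

text \<open>Coefficient vectors of the linear forms s_2, s_3, s_4, s_5.\<close>
definition svec :: "nat \<Rightarrow> nat \<Rightarrow> nat" where
  "svec i l =
    (if i = 2 then [1,1,2,0,0,0,0,0] ! l
     else if i = 3 then [1,1,0,2,0,0,0,0] ! l
     else if i = 4 then [1,0,1,0,0,0,1,0] ! l
     else if i = 5 then [1,0,0,1,0,0,1,0] ! l
     else 0)"

definition Zmat :: "nat \<Rightarrow> nat \<Rightarrow> nat \<Rightarrow> nat \<Rightarrow> nat" where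
  "Zmat i j l m = svec i l * svec j m"

definition trZ :: "nat \<Rightarrow> nat \<Rightarrow> nat" where
  "trZ i j = (\<Sum>l<8. Zmat i j l l)"

text \<open>A nimrep of dimension n: G l is the n x n non-negative integer matrix
  (entries G l a b for a, b < n).\<close>
definition is_nimrep :: "nat \<Rightarrow> (nat \<Rightarrow> nat \<Rightarrow> nat \<Rightarrow> nat) \<Rightarrow> bool" where
  "is_nimrep n G \<longleftrightarrow>
     (\<forall>a<n. \<forall>b<n. G 0 a b = (if a = b then 1 else 0)) \<and>
     (\<forall>l<8. \<forall>a<n. \<forall>b<n. G (dual l) a b = G l b a) \<and>
     (\<forall>l<8. \<forall>m<8. \<forall>a<n. \<forall>b<n.
        of_nat (\<Sum>k<n. G l a k * G m k b) = (\<Sum>v<8. Nfus l m v * of_nat (G v a b)))"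

text \<open>Equivalence: P G1_l P^{-1} = G2_l for the permutation matrix P of sigma.\<close>
definition nimrep_equiv :: "nat \<Rightarrow> (nat \<Rightarrow> nat \<Rightarrow> nat \<Rightarrow> nat) \<Rightarrow> (nat \<Rightarrow> nat \<Rightarrow> nat \<Rightarrow> nat) \<Rightarrow> bool" where
  "nimrep_equiv n G1 G2 \<longleftrightarrow>
     (\<exists>\<sigma>. (\<sigma> permutes {..<n}) \<and>
        (\<forall>l<8. \<forall>a<n. \<forall>b<n. G2 l (\<sigma> a) (\<sigma> b) = G1 l a b))"

definition unitary_mat :: "nat \<Rightarrow> (nat \<Rightarrow> nat \<Rightarrow> complex) \<Rightarrow> bool" where
  "unitary_mat n U \<longleftrightarrow>
     (\<forall>a<n. \<forall>b<n. (\<Sum>k<n. cnj (U k a) * U k b) = (if a = b then 1 else 0))"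

text \<open>Nimrep matches Z_{ij}: dimension Tr Z and the G_l are simultaneously unitarily
  diagonalisable, the k-th common eigenvector having eigenvalues S_{l,e k}/S_{0,e k},
  where e enumerates Exp(Z) with multiplicities.\<close>
definition matches :: "nat \<Rightarrow> nat \<Rightarrow> nat \<Rightarrow> (nat \<Rightarrow> nat \<Rightarrow> nat \<Rightarrow> nat) \<Rightarrow> bool" where
  "matches i j n G \<longleftrightarrow> n = trZ i j \<and>
     (\<exists>U e. unitary_mat n U \<and> (\<forall>k<n. e k < (8::nat)) \<and>
        (\<forall>m<8. card {k. k < n \<and> e k = m} = Zmat i j m m) \<and>
        (\<forall>l<8. \<forall>a<n. \<forall>b<n.
           (\<Sum>k<n. \<Sum>k'<n. cnj (U k a) * of_nat (G l k k') * U k' b)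
             = (if a = b then S l (e a) / S 0 (e a) else 0)))"

end

theory Submission
  imports Defs
begin

lemma less8_cases: "(m::nat) < 8 \<Longrightarrow> m = 0 \<or> m = 1 \<or> m = 2 \<or> m = 3 \<or> m = 4 \<or> m = 5 \<or> m = 6 \<or> m = 7"
  by auto

lemma Zdiag:
  assumes "(i, j) \<in> {(2::nat, 5::nat), (5, 2), (3, 4), (4, 3)}" and "m < 8"
  shows "Zmat i j m m = (if m = 0 then 1 else 0)"
  using assms less8_cases[OF assms(2)] by (auto simp: Zmat_def svec_def)

lemma trZ1:
  assumes "(i, j) \<in> {(2::nat, 5::nat), (5, 2), (3, 4), (4, 3)}"
  shows "trZ i j = 1"
proof -
  have "trZ i j = (\<Sum>l<(8::nat). (if l = 0 then 1 else 0::nat))"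
    unfolding trZ_def using Zdiag[OF assms] by (intro sum.cong) auto
  also have "\<dots> = 1" by (simp add: sum.If_cases)
  finally show ?thesis .
qed

definition dims :: "nat \<Rightarrow> nat" where
  "dims l = [1,1,2,2,2,2,3,3] ! l"

lemma dims_S: "l < 8 \<Longrightarrow> of_nat (dims l) = S l 0 / S 0 0"
  using less8_cases[of l] by (auto simp: dims_def S_def Smat_int_def)

lemma dims_S6: "l < 8 \<Longrightarrow> of_nat (dims l) = 6 * S l 0"
  using less8_cases[of l] by (auto simp: dims_def S_def Smat_int_def)

lemma orth: "r < 8 \<Longrightarrow> (\<Sum>v<8. cnj (S v r) * of_nat (dims v)) = (if r = 0 then 6 else 0)"
  using less8_cases[of r]
  by (auto simp: dims_def S_def Smat_int_def numeral_eq_Suc lessThan_Suc complex_eq_iff)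

lemma fusion_dims:
  assumes "l < 8" "m < 8"
  shows "(\<Sum>v<8. Nfus l m v * of_nat (dims v)) = of_nat (dims l) * of_nat (dims m)"
proof -
  have "(\<Sum>v<8. Nfus l m v * of_nat (dims v)) =
        (\<Sum>v<8. \<Sum>r<8. S l r * S m r / S 0 r * (cnj (S v r) * of_nat (dims v)))"
    unfolding Nfus_def sum_distrib_right by (intro sum.cong refl) (simp add: algebra_simps)
  also have "\<dots> = (\<Sum>r<8. S l r * S m r / S 0 r * (\<Sum>v<8. cnj (S v r) * of_nat (dims v)))"
    by (subst sum.swap) (simp add: sum_distrib_left)
  also have "\<dots> = (\<Sum>r<8. S l r * S m r / S 0 r * (if r = 0 then 6 else 0))"
    using orth by (intro sum.cong) auto
  also have "\<dots> = S l 0 * S m 0 / S 0 0 * 6"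
    by (simp add: sum.If_cases if_distrib cong: if_cong)
  also have "\<dots> = of_nat (dims l) * of_nat (dims m)"
    using dims_S6[OF assms(1)] dims_S6[OF assms(2)] by (simp add: S_def Smat_int_def)
  finally show ?thesis .
qed

theorem proposition6p3:
  assumes "(i, j) \<in> {(2::nat, 5::nat), (5, 2), (3, 4), (4, 3)}"
  shows "(\<exists>n G. is_nimrep n G \<and> matches i j n G) \<and>
         (\<forall>n G1 G2. is_nimrep n G1 \<and> matches i j n G1 \<and>
                    is_nimrep n G2 \<and> matches i j n G2 \<longrightarrow> nimrep_equiv n G1 G2)"
proof
  define G where "G = (\<lambda>l (a::nat) (b::nat). dims l)"
  have "is_nimrep 1 G"
    unfolding is_nimrep_def G_def dual_def
    using fusion_dims by (auto simp: dims_def)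
  moreover have "matches i j 1 G"
    unfolding matches_def
  proof (intro conjI exI[of _ "\<lambda>_ _. 1"] exI[of _ "\<lambda>_. 0"])
    show "1 = trZ i j" using trZ1[OF assms] by simp
    show "unitary_mat 1 (\<lambda>_ _. 1)" by (simp add: unitary_mat_def)
    show "\<forall>k<1. (0::nat) < 8" by simp
    show "\<forall>m<8. card {k::nat. k < 1 \<and> 0 = m} = Zmat i j m m"
    proof (intro allI impI)
      fix m :: nat assume "m < 8"
      have eqs: "{k. k < (1::nat) \<and> 0 = m} = (if m = 0 then {0} else {})" by auto
      show "card {k::nat. k < 1 \<and> 0 = m} = Zmat i j m m"
        unfolding Zdiag[OF assms \<open>m < 8\<close>] by (cases "m = 0") (simp_all add: lessThan_def[symmetric])
    qed
    show "\<forall>l<8. \<forall>a<(1::nat). \<forall>b<(1::nat). (\<Sum>k<(1::nat). \<Sum>k'<(1::nat). cnj 1 * of_nat (G l k k') * 1) =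
           (if a = b then S l 0 / S 0 0 else 0)"
      using dims_S by (simp add: G_def)
  qed
  ultimately show "\<exists>n G. is_nimrep n G \<and> matches i j n G" by blast
next
  have key: "G l 0 0 = dims l" if "matches i j n G" "l < 8" for n G l
  proof -
    from that(1) obtain U e where n: "n = trZ i j" and U: "unitary_mat n U"
      and c: "\<forall>m<8. card {k. k < n \<and> e k = m} = Zmat i j m m"
      and ev: "\<forall>l<8. \<forall>a<n. \<forall>b<n.
           (\<Sum>k<n. \<Sum>k'<n. cnj (U k a) * of_nat (G l k k') * U k' b)
             = (if a = b then S l (e a) / S 0 (e a) else 0)"
      unfolding matches_def by blast
    have n1: "n = 1" using n trZ1[OF assms] by simp
    have "card {k. k < 1 \<and> e k = 0} = 1" using c Zdiag[OF assms, of 0] n1 by simp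
    then have e0: "e 0 = 0"
      by (metis (mono_tags, lifting) One_nat_def card.empty less_one mem_Collect_eq zero_neq_one
          equals0I)
    have u: "cnj (U 0 0) * U 0 0 = 1" using U n1 by (simp add: unitary_mat_def)
    have "cnj (U 0 0) * of_nat (G l 0 0) * U 0 0 = S l 0 / S 0 0"
      using ev that(2) n1 e0 by simp
    then have "of_nat (G l 0 0) = (S l 0 / S 0 0 :: complex)"
      using u by (metis mult.commute mult.left_commute mult.right_neutral)
    then have "(of_nat (G l 0 0) :: complex) = of_nat (dims l)" using dims_S[OF that(2)] by simp
    then show ?thesis using of_nat_eq_iff by blast
  qed
  show "\<forall>n G1 G2. is_nimrep n G1 \<and> matches i j n G1 \<and>
                    is_nimrep n G2 \<and> matches i j n G2 \<longrightarrow> nimrep_equiv n G1 G2"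
  proof (intro allI impI)
    fix n G1 G2 assume h: "is_nimrep n G1 \<and> matches i j n G1 \<and> is_nimrep n G2 \<and> matches i j n G2"
    then have n1: "n = 1" using trZ1[OF assms] by (simp add: matches_def)
    show "nimrep_equiv n G1 G2"
      unfolding nimrep_equiv_def
    proof (rule exI[of _ id], intro conjI allI impI)
      show "id permutes {..<n}" by (rule permutes_id)
      fix l a b assume "l < (8::nat)" "a < n" "b < n"
      then have "a = 0" "b = 0" using n1 by auto
      then show "G2 l (id a) (id b) = G1 l a b"
        using key[of n G1 l] key[of n G2 l] h \<open>l < 8\<close> by simp
    qed
  qed
qed

end
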